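(* For $t\in(0,1)$ and $n\ge1$, $$r_n=-\frac12+\frac{2n+1+\alpha+\beta+(1-t)x_n'}{2x_n}-\frac{\big(2y_n+\beta-(1-t)x_n+t\big)\big(2n+1+\alpha+\beta-x_n\big)}{2t\,x_n}.$$
   Context: Fix $\alpha>0$, $\beta>0$, and real $A,B$ with $A\ge0$, $A+B\ge0$, not both zero; $\theta$ is the Heaviside step function. For $t\in(0,1)$ let $w(x;t)=x^\alpha(1-x)^\beta(A+B\theta(x-t))$ on $[0,1]$, and let $P_n(x)=P_n(x;t)$ be the monic orthogonal polynomials: $\int_0^1P_iP_jw\,dx=h_i(t)\delta_{ij}$, $h_i>0$. Define $r_n(t)=B\,t^\alpha(1-t)^\beta P_n(t;t)P_{n-1}(t;t)/h_{n-1}$, $x_n(t)=\frac{\beta}{h_n}\int_0^1\frac{P_n(y)^2}{1-y}\,y^\alpha(1-y)^\beta(A+B\theta(y-t))\,dy$, $y_n(t)=\frac{\beta}{h_{n-1}}\int_0^1\frac{P_n(y)P_{n-1}(y)}{1-y}\,y^\alpha(1-y)^\beta(A+B\theta(y-t))\,dy$. A prime denotes $d/dt$. *)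

theory Defs
  imports "HOL-Analysis.Analysis" "HOL-Computational_Algebra.Polynomial"
begin

definition wt :: "real \<Rightarrow> real \<Rightarrow> real \<Rightarrow> real \<Rightarrow> real \<Rightarrow> real \<Rightarrow> real" where
  "wt \<alpha> \<beta> A B t x = x powr \<alpha> * (1 - x) powr \<beta> * (A + B * (if x - t \<ge> 0 then 1 else 0))"

definition is_monic_OP :: "real \<Rightarrow> real \<Rightarrow> real \<Rightarrow> real \<Rightarrow> real \<Rightarrow> nat \<Rightarrow> real poly \<Rightarrow> bool" where
  "is_monic_OP \<alpha> \<beta> A B t n P \<longleftrightarrow>
     degree P = n \<and> lead_coeff P = 1 \<and>
     (\<forall>Q :: real poly. degree Q < n \<longrightarrow>
        integral {0..1} (\<lambda>x. poly P x * poly Q x * wt \<alpha> \<beta> A B t x) = 0)"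

definition OP :: "real \<Rightarrow> real \<Rightarrow> real \<Rightarrow> real \<Rightarrow> nat \<Rightarrow> real \<Rightarrow> real poly" where
  "OP \<alpha> \<beta> A B n t = (THE P. is_monic_OP \<alpha> \<beta> A B t n P)"

definition hn :: "real \<Rightarrow> real \<Rightarrow> real \<Rightarrow> real \<Rightarrow> nat \<Rightarrow> real \<Rightarrow> real" where
  "hn \<alpha> \<beta> A B n t = integral {0..1} (\<lambda>x. (poly (OP \<alpha> \<beta> A B n t) x)\<^sup>2 * wt \<alpha> \<beta> A B t x)"

definition rn :: "real \<Rightarrow> real \<Rightarrow> real \<Rightarrow> real \<Rightarrow> nat \<Rightarrow> real \<Rightarrow> real" where
  "rn \<alpha> \<beta> A B n t = B * t powr \<alpha> * (1 - t) powr \<beta> * poly (OP \<alpha> \<beta> A B n t) t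
      * poly (OP \<alpha> \<beta> A B (n - 1) t) t / hn \<alpha> \<beta> A B (n - 1) t"

definition xn :: "real \<Rightarrow> real \<Rightarrow> real \<Rightarrow> real \<Rightarrow> nat \<Rightarrow> real \<Rightarrow> real" where
  "xn \<alpha> \<beta> A B n t = \<beta> / hn \<alpha> \<beta> A B n t *
     integral {0..1} (\<lambda>y. (poly (OP \<alpha> \<beta> A B n t) y)\<^sup>2 / (1 - y) * wt \<alpha> \<beta> A B t y)"

definition yn :: "real \<Rightarrow> real \<Rightarrow> real \<Rightarrow> real \<Rightarrow> nat \<Rightarrow> real \<Rightarrow> real" where
  "yn \<alpha> \<beta> A B n t = \<beta> / hn \<alpha> \<beta> A B (n - 1) t *
     integral {0..1} (\<lambda>y. poly (OP \<alpha> \<beta> A B n t) y * poly (OP \<alpha> \<beta> A B (n - 1) t) y / (1 - y)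
        * wt \<alpha> \<beta> A B t y)"

end

theory Submission
  imports Defs
begin

locale jw =
  fixes al be A B :: real
  assumes al: "al > 0" and be: "be > 0" and A: "A \<ge> 0" and AB: "A + B \<ge> 0"
    and nz: "\<not> (A = 0 \<and> B = 0)"
begin

definition u :: "real \<Rightarrow> real" where "u x = x powr al * (1 - x) powr be"
definition v :: "real \<Rightarrow> real" where "v x = u x / (1 - x)"

lemma cont_u: "continuous_on {0..1} u"
  unfolding u_def
  by (intro continuous_intros continuous_on_powr') (auto simp: al be)

lemma u_pos: "0 < x \<Longrightarrow> x < 1 \<Longrightarrow> u x > 0"
  by (simp add: u_def)

lemma u_nonneg: "u x \<ge> 0"
  by (simp add: u_def)

lemma u1: "u 1 = 0" by (simp add: u_def)
lemma u0: "u 0 = 0" using al by (simp add: u_def)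

lemma wt_eq: "wt al be A B s x = A * u x + (if x \<in> {s..} then B * u x else 0)"
  by (simp add: wt_def u_def algebra_simps)

lemma wt_nonneg: "wt al be A B s x \<ge> 0"
proof -
  have "0 \<le> (A + B) * u x" using AB u_nonneg[of x] by simp
  thus ?thesis using A u_nonneg[of x] by (auto simp: wt_eq algebra_simps)
qed

lemma split_gen:
  fixes g :: "real \<Rightarrow> real"
  assumes i0: "g integrable_on {0..1}" and iS: "g integrable_on {s..1}"
    and s: "0 \<le> s" "s \<le> 1"
  shows "((\<lambda>x. A * g x + (if x \<in> {s..} then B * g x else 0)) has_integral
      (A * integral {0..1} g + B * integral {s..1} g)) {0..1}"
proof -
  have e: "{s..} \<inter> {0..1} = {s..1::real}" using s by auto
  have "(\<lambda>x. B * g x) integrable_on ({s..} \<inter> {0..1})"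
    unfolding e using integrable_cmul[OF iS, of B] by simp
  hence 1: "((\<lambda>x. if x \<in> {s..} then B * g x else 0) has_integral B * integral {s..1} g) {0..1}"
    using integral_restrict_Int[of "{0..1}" "{s..}" "\<lambda>x. B * g x"] integrable_restrict_Int[of "{s..}" "\<lambda>x. B * g x" "{0..1}"] e
    by (metis has_integral_integrable_integral integral_mult_right)
  have 2: "((\<lambda>x. A * g x) has_integral A * integral {0..1} g) {0..1}"
    using has_integral_cmul[OF integrable_integral[OF i0], of A] by simp
  show ?thesis using has_integral_add[OF 2 1] by simp
qed


lemma u_deriv:
  assumes "0 < x" "x < 1"
  shows "(u has_real_derivative (al / x - be / (1 - x)) * u x) (at x)"
  unfolding u_def using assms
  apply (auto intro!: derivative_eq_intros)
  apply (simp add: powr_diff field_simps)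
  done


lemma ftc_j:
  assumes c: "0 \<le> c" "c < 1"
  shows "((\<lambda>x. (real j + 1 + al) * (x ^ j * u x) - be * (x ^ (j+1) * v x)) has_integral
     (- (c ^ (j+1) * u c))) {c..1}"
proof -
  define F where "F x = x ^ (j+1) * u x" for x
  have cF: "continuous_on {c..1} F"
    unfolding F_def using c by (intro continuous_intros continuous_on_subset[OF cont_u]) auto
  have dF: "(F has_vector_derivative ((real j + 1 + al) * (x ^ j * u x) - be * (x ^ (j+1) * v x))) (at x)"
    if "x \<in> {c<..<1}" for x
  proof -
    have x: "0 < x" "x < 1" using that c by auto
    have p: "((\<lambda>x. x^(j+1)) has_real_derivative real (j+1) * x^j) (at x)"
      using DERIV_pow[of "j+1" x] by simp
    have "(F has_real_derivative (real (j+1) * x ^ j * u x + x^(j+1) * ((al / x - be / (1 - x)) * u x))) (at x)"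
      unfolding F_def using DERIV_mult[OF p u_deriv[OF x]] by (rule DERIV_cong) (simp add: algebra_simps)
    moreover have "real (j+1) * x ^ j * u x + x^(j+1) * ((al / x - be / (1 - x)) * u x)
        = (real j + 1 + al) * (x ^ j * u x) - be * (x ^ (j+1) * v x)"
      using x by (simp add: v_def field_simps)
    ultimately show ?thesis by (simp add: has_real_derivative_iff_has_vector_derivative)
  qed
  have "F 1 = 0" by (simp add: F_def u1)
  thus ?thesis using fundamental_theorem_of_calculus_interior[OF _ cF dF] c by (simp add: F_def)
qed

lemma cont_xu: "continuous_on {0..1} (\<lambda>x. x ^ j * u x)"
  by (intro continuous_intros cont_u)

lemma int_xu: "0 \<le> c \<Longrightarrow> (\<lambda>x. x ^ j * u x) integrable_on {c..1}"
  by (rule integrable_continuous_interval, rule continuous_on_subset[OF cont_xu]) auto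

lemma v_rel: "x ^ j * v x = x ^ (j+1) * v x + x ^ j * u x"
proof (cases "x = 1")
  case True thus ?thesis by (simp add: v_def u1)
next
  case False thus ?thesis by (simp add: v_def field_simps)
qed

lemma int_xv: assumes "0 \<le> c" "c < 1" shows "(\<lambda>x. x ^ j * v x) integrable_on {c..1}"
proof -
  have i1: "(\<lambda>x. (real j + 1 + al) * (x ^ j * u x) - be * (x ^ (j+1) * v x)) integrable_on {c..1}"
    using ftc_j[OF assms] by blast
  have i2: "(\<lambda>x. (real j + 1 + al) * (x ^ j * u x)) integrable_on {c..1}"
    using integrable_cmul[OF int_xu[of c j], of "real j + 1 + al"] assms by simp
  have "(\<lambda>x. (1/be) * ((real j + 1 + al) * (x ^ j * u x) - ((real j + 1 + al) * (x ^ j * u x) - be * (x ^ (j+1) * v x)))) integrable_on {c..1}"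
    using integrable_cmul[OF integrable_diff[OF i2 i1], of "1/be"] by simp
  hence i3: "(\<lambda>x. x ^ (j+1) * v x) integrable_on {c..1}" using be by simp
  have e: "(\<lambda>x. x ^ j * v x) = (\<lambda>x. x ^ (j+1) * v x + x ^ j * u x)"
    by (rule ext, rule v_rel)
  show ?thesis unfolding e by (rule integrable_add[OF i3 int_xu]) (use assms in simp)
qed

lemma ibp_c:
  assumes "0 \<le> c" "c < 1"
  shows "be * integral {c..1} (\<lambda>x. x ^ j * v x)
     = (real j + al + be + 1) * integral {c..1} (\<lambda>x. x ^ j * u x) + c^(j+1) * u c"
proof -
  define f where "f x = x ^ j * u x" for x
  define g where "g x = x ^ (j+1) * v x" for x
  define h where "h x = x ^ j * v x" for x
  have fi: "f integrable_on {c..1}" unfolding f_def using int_xu[of c j] assms by simp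
  have gi: "g integrable_on {c..1}" unfolding g_def using int_xv[OF assms, of "j+1"] by simp
  have "integral {c..1} (\<lambda>x. (real j + 1 + al) * f x - be * g x) = - (c ^ (j+1) * u c)"
    using integral_unique[OF ftc_j[OF assms, of j]] unfolding f_def g_def .
  also have "integral {c..1} (\<lambda>x. (real j + 1 + al) * f x - be * g x)
      = (real j + 1 + al) * integral {c..1} f - be * integral {c..1} g"
    using integral_diff[OF integrable_on_mult_right[OF fi, of "real j + 1 + al"] integrable_on_mult_right[OF gi, of be]]
      integral_mult[OF fi, of "real j + 1 + al"] integral_mult[OF gi, of be]
    by argo
  finally have f: "(real j + 1 + al) * integral {c..1} f - be * integral {c..1} g = - (c ^ (j+1) * u c)" .
  have "h = (\<lambda>x. g x + f x)" unfolding f_def g_def h_def by (rule ext, rule v_rel)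
  hence g: "integral {c..1} h = integral {c..1} g + integral {c..1} f"
    using fi gi by (simp add: integral_add)
  have "be * integral {c..1} h = (real j + al + be + 1) * integral {c..1} f + c^(j+1) * u c"
    using f g by (simp add: algebra_simps)
  thus ?thesis unfolding f_def[abs_def] h_def[abs_def] .
qed


definition mu :: "real \<Rightarrow> nat \<Rightarrow> real" where
  "mu s j = integral {0..1} (\<lambda>x. x ^ j * wt al be A B s x)"
definition nu :: "real \<Rightarrow> nat \<Rightarrow> real" where
  "nu s j = integral {0..1} (\<lambda>x. x ^ j / (1 - x) * wt al be A B s x)"

lemma mu_hasint:
  assumes "0 \<le> s" "s \<le> 1"
  shows "((\<lambda>x. x ^ j * wt al be A B s x) has_integral
     (A * integral {0..1} (\<lambda>x. x ^ j * u x) + B * integral {s..1} (\<lambda>x. x ^ j * u x))) {0..1}"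
proof -
  have e: "(\<lambda>x. x ^ j * wt al be A B s x) = (\<lambda>x. A * (x ^ j * u x) + (if x \<in> {s..} then B * (x ^ j * u x) else 0))"
    by (rule ext) (simp add: wt_eq algebra_simps)
  show ?thesis unfolding e by (rule split_gen) (use assms int_xu in auto)
qed

lemma nu_hasint:
  assumes "0 \<le> s" "s < 1"
  shows "((\<lambda>x. x ^ j / (1 - x) * wt al be A B s x) has_integral
     (A * integral {0..1} (\<lambda>x. x ^ j * v x) + B * integral {s..1} (\<lambda>x. x ^ j * v x))) {0..1}"
proof -
  have e: "(\<lambda>x. x ^ j / (1 - x) * wt al be A B s x) = (\<lambda>x. A * (x ^ j * v x) + (if x \<in> {s..} then B * (x ^ j * v x) else 0))"
    by (rule ext) (simp add: wt_eq v_def algebra_simps)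
  show ?thesis unfolding e by (rule split_gen) (use assms int_xv in auto)
qed

lemma mu_eq: "0 \<le> s \<Longrightarrow> s \<le> 1 \<Longrightarrow>
   mu s j = A * integral {0..1} (\<lambda>x. x ^ j * u x) + B * integral {s..1} (\<lambda>x. x ^ j * u x)"
  unfolding mu_def using mu_hasint by (rule integral_unique)

lemma nu_eq: "0 \<le> s \<Longrightarrow> s < 1 \<Longrightarrow>
   nu s j = A * integral {0..1} (\<lambda>x. x ^ j * v x) + B * integral {s..1} (\<lambda>x. x ^ j * v x)"
  unfolding nu_def using nu_hasint by (rule integral_unique)

lemma mom_ibp:
  assumes "0 < s" "s < 1"
  shows "be * nu s j = (real j + al + be + 1) * mu s j + B * s ^ (j+1) * u s"
proof -
  have "be * nu s j = A * (be * integral {0..1} (\<lambda>x. x ^ j * v x)) + B * (be * integral {s..1} (\<lambda>x. x ^ j * v x))"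
    using assms by (simp add: nu_eq algebra_simps)
  also have "\<dots> = A * ((real j + al + be + 1) * integral {0..1} (\<lambda>x. x ^ j * u x))
     + B * ((real j + al + be + 1) * integral {s..1} (\<lambda>x. x ^ j * u x) + s^(j+1) * u s)"
    using ibp_c[of 0 j] ibp_c[of s j] assms by (simp add: u0)
  also have "\<dots> = (real j + al + be + 1) * mu s j + B * s ^ (j+1) * u s"
    using assms by (simp add: mu_eq algebra_simps)
  finally show ?thesis .
qed

lemma int_vrel: assumes "0 \<le> c" "c < 1"
  shows "integral {c..1} (\<lambda>x. x ^ j * v x) = integral {c..1} (\<lambda>x. x ^ (j+1) * v x) + integral {c..1} (\<lambda>x. x ^ j * u x)"
proof -
  have e: "(\<lambda>x. x ^ j * v x) = (\<lambda>x. x ^ (j+1) * v x + x ^ j * u x)"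
    by (rule ext, rule v_rel)
  show ?thesis unfolding e by (rule integral_add[OF int_xv[OF assms] int_xu[OF assms(1)]])
qed

lemma mom_rel:
  assumes "0 \<le> s" "s < 1"
  shows "nu s j - nu s (j+1) = mu s j"
  using assms int_vrel[of 0 j] int_vrel[of s j] by (simp add: nu_eq mu_eq algebra_simps)

lemma mu_deriv:
  assumes "0 < t" "t < 1"
  shows "((\<lambda>s. mu s j) has_real_derivative (- B * (t ^ j * u t))) (at t)"
proof -
  have d: "((\<lambda>s. integral {s..1} (\<lambda>x. x ^ j * u x)) has_real_derivative - (t ^ j * u t)) (at t)"
    using integral_has_real_derivative'[OF cont_xu, of t j] assms by (simp add: at_within_Icc_at)
  have "((\<lambda>s. A * integral {0..1} (\<lambda>x. x ^ j * u x) + B * integral {s..1} (\<lambda>x. x ^ j * u x))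
      has_real_derivative (- B * (t ^ j * u t))) (at t)"
    by (auto intro!: derivative_eq_intros d)
  then show ?thesis
    by (rule has_field_derivative_transform_within_open[where S="{0<..<1}"]) (use assms in \<open>auto simp: mu_eq\<close>)
qed

lemma nu_deriv:
  assumes "0 < t" "t < 1"
  shows "((\<lambda>s. nu s j) has_real_derivative (- B * (t ^ j * v t))) (at t)"
proof -
  define c where "c = t / 2"
  define d where "d = (1 + t) / 2"
  have cd: "0 < c" "c < t" "t < d" "d < 1" using assms by (auto simp: c_def d_def)
  have cv: "continuous_on {c..d} (\<lambda>x. x ^ j * v x)"
    unfolding v_def using cd
    by (intro continuous_intros continuous_on_subset[OF cont_u]) auto
  have d1: "((\<lambda>s. integral {s..d} (\<lambda>x. x ^ j * v x)) has_real_derivative - (t ^ j * v t)) (at t)"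
    using integral_has_real_derivative'[OF cv, of t] cd by (simp add: at_within_Icc_at)
  have "((\<lambda>s. A * integral {0..1} (\<lambda>x. x ^ j * v x) + B * (integral {s..d} (\<lambda>x. x ^ j * v x) + integral {d..1} (\<lambda>x. x ^ j * v x)))
      has_real_derivative (- B * (t ^ j * v t))) (at t)"
    by (auto intro!: derivative_eq_intros d1)
  then show ?thesis
  proof (rule has_field_derivative_transform_within_open[where S="{c<..<d}"])
    fix s assume s: "s \<in> {c<..<d}"
    have "integral {s..d} (\<lambda>x. x ^ j * v x) + integral {d..1} (\<lambda>x. x ^ j * v x) = integral {s..1} (\<lambda>x. x ^ j * v x)"
      using Henstock_Kurzweil_Integration.integral_combine[where a=s and c=d and b=1 and f="\<lambda>x. x^j * v x"] s cd int_xv[of s j] by auto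
    thus "A * integral {0..1} (\<lambda>x. x ^ j * v x) + B * (integral {s..d} (\<lambda>x. x ^ j * v x) + integral {d..1} (\<lambda>x. x ^ j * v x)) = nu s j"
      using s cd by (simp add: nu_eq)
  qed (use cd in auto)
qed


end


definition Lf :: "(nat \<Rightarrow> real) \<Rightarrow> real poly \<Rightarrow> real" where
  "Lf m p = (\<Sum>j\<le>degree p. coeff p j * m j)"

lemma Lf_bound: "degree p \<le> N \<Longrightarrow> Lf m p = (\<Sum>j\<le>N. coeff p j * m j)"
  unfolding Lf_def
  by (rule sum.mono_neutral_left) (auto simp: coeff_eq_0)

lemma Lf_add: "Lf m (p + q) = Lf m p + Lf m q"
proof -
  define N where "N = max (degree p) (degree q)"
  have "degree (p + q) \<le> N" unfolding N_def by (rule degree_add_le) auto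
  thus ?thesis using Lf_bound[of p N m] Lf_bound[of q N m] Lf_bound[of "p+q" N m]
    by (simp add: N_def sum.distrib algebra_simps)
qed

lemma Lf_smult: "Lf m (smult c p) = c * Lf m p"
  using Lf_bound[of "smult c p" "degree p" m] by (simp add: Lf_def sum_distrib_left algebra_simps)

lemma Lf_minus: "Lf m (- p) = - Lf m p"
  using Lf_smult[of m "-1" p] by simp

lemma Lf_diff: "Lf m (p - q) = Lf m p - Lf m q"
  using Lf_add[of m p "-q"] Lf_minus[of m q] by simp

lemma Lf_0[simp]: "Lf m 0 = 0" by (simp add: Lf_def)

lemma Lf_sum: "finite S \<Longrightarrow> Lf m (\<Sum>k\<in>S. f k) = (\<Sum>k\<in>S. Lf m (f k))"
  by (induction S rule: finite_induct) (auto simp: Lf_add)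

lemma Lf_pCons0: "Lf m (pCons 0 p) = Lf (\<lambda>j. m (Suc j)) p"
proof -
  have "Lf m (pCons 0 p) = (\<Sum>j\<le>Suc (degree p). coeff (pCons 0 p) j * m j)"
    by (rule Lf_bound) (simp add: degree_pCons_le)
  also have "\<dots> = (\<Sum>j\<le>degree p. coeff p j * m (Suc j))"
    by (subst sum.atMost_Suc_shift) simp
  finally show ?thesis by (simp add: Lf_def)
qed

lemma Lf_mlin: "Lf (\<lambda>j. a * m1 j + b * m2 j) p = a * Lf m1 p + b * Lf m2 p"
  by (simp add: Lf_def sum.distrib sum_distrib_left algebra_simps)

lemma Lf_poly: "Lf (\<lambda>j. c * x ^ j) p = c * poly p x"
  by (simp add: Lf_def poly_altdef sum_distrib_left algebra_simps)

lemma Lf_xderiv: "Lf (\<lambda>j. real j * m j) p = Lf m (pCons 0 (pderiv p))"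
proof -
  have "Lf m (pCons 0 (pderiv p)) = Lf (\<lambda>j. m (Suc j)) (pderiv p)" by (rule Lf_pCons0)
  also have "\<dots> = (\<Sum>j\<le>degree p. coeff (pderiv p) j * m (Suc j))"
    by (rule Lf_bound) (simp add: degree_pderiv)
  also have "\<dots> = (\<Sum>j\<le>degree p. real (Suc j) * coeff p (Suc j) * m (Suc j))"
    by (simp add: coeff_pderiv)
  also have "\<dots> = (\<Sum>j\<le>Suc (degree p). real j * coeff p j * m j)"
    by (subst sum.atMost_Suc_shift) simp
  also have "\<dots> = Lf (\<lambda>j. real j * m j) p"
    by (subst Lf_bound[of p "Suc (degree p)"]) (auto simp: algebra_simps)
  finally show ?thesis by simp
qed

context jw begin

definition Ip :: "real \<Rightarrow> real poly \<Rightarrow> real" where "Ip s p = Lf (mu s) p"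
definition Jp :: "real \<Rightarrow> real poly \<Rightarrow> real" where "Jp s p = Lf (nu s) p"

lemma int_poly:
  assumes "0 \<le> s" "s \<le> 1"
  shows "((\<lambda>x. poly p x * wt al be A B s x) has_integral Ip s p) {0..1}"
proof -
  have e: "(\<lambda>x. poly p x * wt al be A B s x) = (\<lambda>x. \<Sum>j\<le>degree p. coeff p j * (x ^ j * wt al be A B s x))"
    by (rule ext) (simp only: poly_altdef sum_distrib_right mult.assoc)
  have "((\<lambda>x. \<Sum>j\<le>degree p. coeff p j * (x ^ j * wt al be A B s x)) has_integral (\<Sum>j\<le>degree p. coeff p j * mu s j)) {0..1}"
    by (intro has_integral_sum has_integral_mult_right) (use mu_hasint[OF assms] in \<open>auto simp: mu_eq[OF assms]\<close>)
  thus ?thesis unfolding e Ip_def Lf_def .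
qed

lemma int_polyJ:
  assumes "0 \<le> s" "s < 1"
  shows "((\<lambda>x. poly p x / (1 - x) * wt al be A B s x) has_integral Jp s p) {0..1}"
proof -
  have e: "(\<lambda>x. poly p x / (1 - x) * wt al be A B s x) = (\<lambda>x. \<Sum>j\<le>degree p. coeff p j * (x ^ j / (1 - x) * wt al be A B s x))"
  proof
    fix x
    have "poly p x / (1 - x) * wt al be A B s x = poly p x * (wt al be A B s x / (1 - x))" by simp
    also have "\<dots> = (\<Sum>j\<le>degree p. coeff p j * x ^ j * (wt al be A B s x / (1 - x)))"
      by (simp only: poly_altdef sum_distrib_right)
    also have "\<dots> = (\<Sum>j\<le>degree p. coeff p j * (x ^ j / (1 - x) * wt al be A B s x))"
      by (rule sum.cong) auto
    finally show "poly p x / (1 - x) * wt al be A B s x = (\<Sum>j\<le>degree p. coeff p j * (x ^ j / (1 - x) * wt al be A B s x))" .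
  qed
  have "((\<lambda>x. \<Sum>j\<le>degree p. coeff p j * (x ^ j / (1 - x) * wt al be A B s x)) has_integral (\<Sum>j\<le>degree p. coeff p j * nu s j)) {0..1}"
    by (intro has_integral_sum has_integral_mult_right) (use nu_hasint[OF assms] in \<open>auto simp: nu_eq[OF assms]\<close>)
  thus ?thesis unfolding e Jp_def Lf_def .
qed

lemma pos_piece:
  assumes "0 \<le> a" "a < b" "b \<le> 1" "p \<noteq> 0" "\<And>x. 0 \<le> x \<Longrightarrow> x \<le> 1 \<Longrightarrow> poly p x \<ge> 0"
  shows "integral {a..b} (\<lambda>x. poly p x * u x) > 0"
proof -
  have c: "continuous_on {a..b} (\<lambda>x. poly p x * u x)"
    by (intro continuous_intros continuous_on_subset[OF cont_u]) (use assms in auto)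
  have nn: "\<And>x. x \<in> {a..b} \<Longrightarrow> poly p x * u x \<ge> 0" using assms u_nonneg by auto
  have "infinite {a<..<b}" using assms by simp
  moreover have "finite {x. poly p x = 0}" using assms poly_roots_finite by blast
  ultimately have "{a<..<b} - {x. poly p x = 0} \<noteq> {}"
  proof (intro notI)
    assume "infinite {a<..<b}" "finite {x. poly p x = 0}" "{a<..<b} - {x. poly p x = 0} = {}"
    hence "{a<..<b} \<subseteq> {x. poly p x = 0}" by blast
    thus False using \<open>infinite {a<..<b}\<close> \<open>finite {x. poly p x = 0}\<close> finite_subset by blast
  qed
  then obtain x where "x \<in> {a<..<b}" "poly p x \<noteq> 0" by blast
  hence x: "a < x" "x < b" "poly p x \<noteq> 0" by auto
  have "poly p x \<ge> 0" using assms(1,3,5) x by auto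
  hence "poly p x > 0" using x by linarith
  moreover have "u x > 0" using x assms by (intro u_pos) auto
  ultimately have "poly p x * u x > 0" by simp
  hence "integral {a..b} (\<lambda>x. poly p x * u x) \<noteq> 0"
    using integral_eq_0_iff[OF c assms(2) nn] x by force
  moreover have "integral {a..b} (\<lambda>x. poly p x * u x) \<ge> 0"
    by (rule integral_nonneg[OF integrable_continuous_interval[OF c]]) (use nn in auto)
  ultimately show ?thesis by linarith
qed

lemma Ip_pos:
  assumes s: "0 < s" "s < 1" and p: "p \<noteq> 0" "\<And>x. 0 \<le> x \<Longrightarrow> x \<le> 1 \<Longrightarrow> poly p x \<ge> 0"
  shows "Ip s p > 0"
proof -
  have cg: "continuous_on {0..1} (\<lambda>x. poly p x * u x)"
    by (intro continuous_intros cont_u)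
  have i0: "(\<lambda>x. poly p x * u x) integrable_on {0..1}" by (rule integrable_continuous_interval[OF cg])
  have iS: "(\<lambda>x. poly p x * u x) integrable_on {s..1}"
    by (rule integrable_continuous_interval, rule continuous_on_subset[OF cg]) (use s in auto)
  have e: "(\<lambda>x. poly p x * wt al be A B s x) = (\<lambda>x. A * (poly p x * u x) + (if x \<in> {s..} then B * (poly p x * u x) else 0))"
    by (rule ext) (simp add: wt_eq algebra_simps)
  have int2: "((\<lambda>x. poly p x * wt al be A B s x) has_integral (A * integral {0..1} (\<lambda>x. poly p x * u x) + B * integral {s..1} (\<lambda>x. poly p x * u x))) {0..1}"
    unfolding e by (rule split_gen[OF i0 iS]) (use s in auto)
  have "Ip s p = A * integral {0..1} (\<lambda>x. poly p x * u x) + B * integral {s..1} (\<lambda>x. poly p x * u x)"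
    using has_integral_unique[OF int_poly int2] s by auto
  also have "integral {0..1} (\<lambda>x. poly p x * u x) = integral {0..s} (\<lambda>x. poly p x * u x) + integral {s..1} (\<lambda>x. poly p x * u x)"
    using Henstock_Kurzweil_Integration.integral_combine[where a=0 and c=s and b=1 and f="\<lambda>x. poly p x * u x"] s i0 by auto
  finally have "Ip s p = A * integral {0..s} (\<lambda>x. poly p x * u x) + (A + B) * integral {s..1} (\<lambda>x. poly p x * u x)"
    by (simp add: algebra_simps)
  moreover have "integral {0..s} (\<lambda>x. poly p x * u x) > 0" by (rule pos_piece) (use s p in auto)
  moreover have "integral {s..1} (\<lambda>x. poly p x * u x) > 0" by (rule pos_piece) (use s p in auto)
  moreover have "A > 0 \<or> A + B > 0" using A AB nz by auto
  ultimately show ?thesis using A AB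
    by (smt (verit, best) mult_nonneg_nonneg mult_pos_pos)
qed

lemma Jp_nonneg:
  assumes s: "0 \<le> s" "s < 1" and p: "\<And>x. 0 \<le> x \<Longrightarrow> x \<le> 1 \<Longrightarrow> poly p x \<ge> 0"
  shows "Jp s p \<ge> 0"
  using int_polyJ[OF s, of p]
  by (rule has_integral_nonneg) (use p wt_nonneg in auto)

lemma Jp_Ip: "0 \<le> s \<Longrightarrow> s < 1 \<Longrightarrow> Jp s p - Jp s (pCons 0 p) = Ip s p"
  unfolding Jp_def Ip_def Lf_pCons0
  using Lf_mlin[of 1 "nu s" "-1" "\<lambda>j. nu s (Suc j)" p] mom_rel[of s]
  by simp

lemma Jp_lin1: "0 \<le> s \<Longrightarrow> s < 1 \<Longrightarrow> Jp s ([:-1, 1:] * f) = - Ip s f"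
proof -
  assume s: "0 \<le> s" "s < 1"
  have "[:-1, 1:] * f = pCons 0 f - f" by (simp add: mult_pCons_left)
  thus ?thesis using Jp_Ip[OF s, of f] by (simp add: Jp_def Lf_diff)
qed

lemma Jp_ibp:
  assumes s: "0 < s" "s < 1"
  shows "be * Jp s p = Ip s (pCons 0 (pderiv p)) + (al + be + 1) * Ip s p + B * u s * s * poly p s"
proof -
  have "be * Jp s p = Lf (\<lambda>j. be * nu s j) p" by (simp add: Jp_def Lf_def sum_distrib_left algebra_simps)
  also have "(\<lambda>j. be * nu s j) = (\<lambda>j. 1 * (real j * mu s j) + (al + be + 1) * mu s j + (B * u s * s) * s ^ j)"
    using mom_ibp[OF s] by (auto simp: algebra_simps)
  also have "Lf \<dots> p = Lf (\<lambda>j. real j * mu s j) p + (al + be + 1) * Lf (mu s) p + Lf (\<lambda>j. (B * u s * s) * s ^ j) p"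
    by (simp add: Lf_def sum.distrib sum_distrib_left algebra_simps)
  finally show ?thesis by (simp add: Lf_xderiv Lf_poly Ip_def)
qed

end

fun gs :: "(real poly \<Rightarrow> real) \<Rightarrow> nat \<Rightarrow> real poly" where
  "gs ip n = monom 1 n - (\<Sum>k<n. smult (ip (monom 1 n * gs ip k) / ip (gs ip k * gs ip k)) (gs ip k))"

declare gs.simps[simp del]

lemma gs_deg: "degree (gs ip n) = n \<and> coeff (gs ip n) n = 1"
proof (induction n rule: less_induct)
  case (less n)
  define S where "S = (\<Sum>k<n. smult (ip (monom 1 n * gs ip k) / ip (gs ip k * gs ip k)) (gs ip k))"
  have e: "gs ip n = monom 1 n - S" unfolding S_def by (subst gs.simps) simp
  have cS: "coeff S n = 0"
    unfolding S_def coeff_sum using less by (auto intro!: sum.neutral simp: coeff_eq_0)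
  have dS: "degree S \<le> n"
    unfolding S_def by (rule degree_sum_le) (use less in \<open>auto intro: order.trans[OF degree_smult_le]\<close>)
  have c: "coeff (gs ip n) n = 1" using cS by (simp add: e)
  have "degree (gs ip n) \<le> n" unfolding e by (rule degree_diff_le) (use dS in \<open>auto simp: degree_monom_le\<close>)
  moreover have "degree (gs ip n) \<ge> n" using c by (metis le_degree one_neq_zero)
  ultimately show ?case using c by simp
qed

lemma gs_0: "gs ip 0 = 1" by (subst gs.simps) simp

lemma gs_degree[simp]: "degree (gs ip n) = n" using gs_deg by blast
lemma gs_lead: "coeff (gs ip n) n = 1" using gs_deg by blast
lemma gs_nz: "gs ip n \<noteq> 0" using gs_lead[of ip n] by auto

locale ipf =
  fixes ip :: "real poly \<Rightarrow> real"
  assumes ip_add: "ip (p + q) = ip p + ip q"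
    and ip_smult: "ip (smult c p) = c * ip p"
    and ip_pos: "p \<noteq> 0 \<Longrightarrow> (\<And>x. 0 \<le> x \<Longrightarrow> x \<le> 1 \<Longrightarrow> poly p x \<ge> 0) \<Longrightarrow> ip p > 0"
begin

lemma ip_minus: "ip (- p) = - ip p" using ip_smult[of "-1" p] by simp
lemma ip_diff: "ip (p - q) = ip p - ip q" using ip_add[of p "-q"] ip_minus[of q] by simp
lemma ip_0[simp]: "ip 0 = 0" using ip_smult[of 0 0] by simp
lemma ip_sum: "finite S \<Longrightarrow> ip (\<Sum>k\<in>S. f k) = (\<Sum>k\<in>S. ip (f k))"
  by (induction S rule: finite_induct) (auto simp: ip_add)

lemma sq_pos: "p \<noteq> 0 \<Longrightarrow> ip (p * p) > 0"
  by (rule ip_pos) auto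

lemma hpos: "ip (gs ip n * gs ip n) > 0"
  by (rule sq_pos[OF gs_nz])

lemma orth: "k < n \<Longrightarrow> ip (gs ip n * gs ip k) = 0"
proof (induction n arbitrary: k rule: less_induct)
  case (less n)
  define c where "c j = ip (monom 1 n * gs ip j) / ip (gs ip j * gs ip j)" for j
  have e: "gs ip n * gs ip k = monom 1 n * gs ip k - (\<Sum>j<n. smult (c j) (gs ip j * gs ip k))"
    by (subst gs.simps) (simp add: c_def left_diff_distrib sum_distrib_right mult_smult_left)
  have z: "ip (gs ip j * gs ip k) = 0" if "j < n" "j \<noteq> k" for j
  proof (cases "j < k")
    case True thus ?thesis using less.IH[of k j] less.prems by (simp add: mult.commute)
  next
    case False thus ?thesis using less.IH[of j k] that by simp
  qed
  have "(\<Sum>j<n. ip (smult (c j) (gs ip j * gs ip k))) = (\<Sum>j\<in>{k}. ip (smult (c j) (gs ip j * gs ip k)))"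
    by (rule sum.mono_neutral_right) (use less.prems z in \<open>auto simp: ip_smult\<close>)
  also have "\<dots> = ip (monom 1 n * gs ip k)" using hpos[of k] by (simp add: ip_smult c_def)
  finally show ?case unfolding e by (simp add: ip_diff ip_sum)
qed

lemma orth_all: "degree q < n \<Longrightarrow> ip (gs ip n * q) = 0"
proof -
  have "\<forall>q. degree q \<le> d \<longrightarrow> d < n \<longrightarrow> ip (gs ip n * q) = 0" for d
  proof (induction d)
    case 0
    show ?case
    proof (intro allI impI)
      fix q :: "real poly" assume "degree q \<le> 0" "0 < n"
      then obtain c where "q = [:c:]" by (metis degree_eq_zeroE le_zero_eq)
      hence "q = smult c (gs ip 0)" by (simp add: gs_0)
      thus "ip (gs ip n * q) = 0" using orth[OF \<open>0 < n\<close>] by (simp add: ip_smult)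
    qed
  next
    case (Suc d)
    show ?case
    proof (intro allI impI)
      fix q :: "real poly" assume q: "degree q \<le> Suc d" "Suc d < n"
      define r where "r = q - smult (coeff q (Suc d)) (gs ip (Suc d))"
      have "degree r \<le> Suc d" unfolding r_def
        by (rule degree_diff_le) (use q in \<open>auto intro: order.trans[OF degree_smult_le]\<close>)
      moreover have "coeff r (Suc d) = 0" by (simp add: r_def gs_lead)
      ultimately have "degree r \<le> d"
      proof -
        assume a: "degree r \<le> Suc d" "coeff r (Suc d) = 0"
        show "degree r \<le> d"
        proof (rule degree_le, intro allI impI)
          fix i assume "d < i"
          show "coeff r i = 0"
          proof (cases "i = Suc d")
            case True thus ?thesis using a by simp
          next
            case False thus ?thesis using a \<open>d < i\<close> by (intro coeff_eq_0) auto
          qed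
        qed
      qed
      hence "ip (gs ip n * r) = 0" using Suc.IH q by auto
      moreover have "ip (gs ip n * gs ip (Suc d)) = 0" using orth q by simp
      moreover have "q = r + smult (coeff q (Suc d)) (gs ip (Suc d))" by (simp add: r_def)
      ultimately show "ip (gs ip n * q) = 0"
        by (metis distrib_left ip_add ip_smult mult_smult_right mult_zero_right add_0)
    qed
  qed
  thus "degree q < n \<Longrightarrow> ip (gs ip n * q) = 0" by blast
qed

lemma unique:
  assumes "degree P = n" "coeff P n = 1" "\<And>Q. degree Q < n \<Longrightarrow> ip (P * Q) = 0"
  shows "P = gs ip n"
proof (rule ccontr)
  define D where "D = P - gs ip n"
  assume "P \<noteq> gs ip n"
  hence D: "D \<noteq> 0" by (simp add: D_def)
  have "degree D \<le> n" unfolding D_def by (rule degree_diff_le) (use assms in auto)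
  moreover have "coeff D n = 0" using assms gs_lead by (simp add: D_def)
  moreover have "degree D \<noteq> n" using D \<open>coeff D n = 0\<close> leading_coeff_0_iff by metis
  ultimately have "degree D < n" by simp
  have "ip (P * D) = 0" using assms(3)[OF \<open>degree D < n\<close>] .
  moreover have "ip (gs ip n * D) = 0" using orth_all[OF \<open>degree D < n\<close>] .
  moreover have "D * D = P * D - gs ip n * D" by (simp add: D_def left_diff_distrib)
  ultimately have "ip (D * D) = 0" by (simp add: ip_diff)
  thus False using sq_pos[OF D] by simp
qed

end

definition pd :: "nat \<Rightarrow> (real \<Rightarrow> real poly) \<Rightarrow> real poly \<Rightarrow> real \<Rightarrow> bool" where
  "pd N P dP t \<longleftrightarrow> (\<forall>s. degree (P s) \<le> N) \<and> degree dP \<le> N \<and>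
     (\<forall>j. ((\<lambda>s. coeff (P s) j) has_real_derivative coeff dP j) (at t))"

lemma pd_const: "degree p \<le> N \<Longrightarrow> pd N (\<lambda>s. p) 0 t"
  by (simp add: pd_def)

lemma pd_mono: "pd N P dP t \<Longrightarrow> N \<le> M \<Longrightarrow> pd M P dP t"
  unfolding pd_def using order.trans by blast

lemma pd_add: "pd N P dP t \<Longrightarrow> pd N Q dQ t \<Longrightarrow> pd N (\<lambda>s. P s + Q s) (dP + dQ) t"
  unfolding pd_def by (auto intro!: derivative_eq_intros degree_add_le)

lemma pd_diff: "pd N P dP t \<Longrightarrow> pd N Q dQ t \<Longrightarrow> pd N (\<lambda>s. P s - Q s) (dP - dQ) t"
  unfolding pd_def by (auto intro!: derivative_eq_intros degree_diff_le)

lemma pd_smult: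
  assumes "pd N P dP t" "(f has_real_derivative f') (at t)"
  shows "pd N (\<lambda>s. smult (f s) (P s)) (smult f' (P t) + smult (f t) dP) t"
  using assms unfolding pd_def
  by (auto intro!: derivative_eq_intros degree_add_le order.trans[OF degree_smult_le] simp: DERIV_continuous)

lemma pd_mult:
  assumes "pd N P dP t" "pd M Q dQ t"
  shows "pd (N + M) (\<lambda>s. P s * Q s) (dP * Q t + P t * dQ) t"
  unfolding pd_def
proof (intro conjI allI)
  fix s show "degree (P s * Q s) \<le> N + M"
    using assms unfolding pd_def by (meson add_mono degree_mult_le order_trans)
next
  show "degree (dP * Q t + P t * dQ) \<le> N + M"
    using assms unfolding pd_def
    by (intro degree_add_le; meson add_mono degree_mult_le order_trans)
next
  fix j
  have dp: "\<And>i. ((\<lambda>s. coeff (P s) i) has_real_derivative coeff dP i) (at t)"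
   and dq: "\<And>i. ((\<lambda>s. coeff (Q s) i) has_real_derivative coeff dQ i) (at t)"
    using assms unfolding pd_def by auto
  have "((\<lambda>s. \<Sum>i\<le>j. coeff (P s) i * coeff (Q s) (j - i)) has_real_derivative
      (\<Sum>i\<le>j. coeff dP i * coeff (Q t) (j - i) + coeff (P t) i * coeff dQ (j - i))) (at t)"
    by (intro DERIV_sum, rule DERIV_cong[OF DERIV_mult[OF dp dq]]) (simp add: algebra_simps)
  thus "((\<lambda>s. coeff (P s * Q s) j) has_real_derivative coeff (dP * Q t + P t * dQ) j) (at t)"
    by (simp add: coeff_mult sum.distrib)
qed

lemma pd_sum:
  assumes "finite S" "\<And>k. k \<in> S \<Longrightarrow> pd N (P k) (dP k) t"
  shows "pd N (\<lambda>s. \<Sum>k\<in>S. P k s) (\<Sum>k\<in>S. dP k) t"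
  using assms
proof (induction S rule: finite_induct)
  case empty thus ?case by (simp add: pd_const)
next
  case (insert x F)
  have "pd N (\<lambda>s. P x s + (\<Sum>k\<in>F. P k s)) (dP x + (\<Sum>k\<in>F. dP k)) t"
    by (rule pd_add) (use insert in auto)
  thus ?case using insert by simp
qed

lemma pd_Lf:
  assumes "pd N P dP t" "\<And>j. ((\<lambda>s. m s j) has_real_derivative m' j) (at t)"
  shows "((\<lambda>s. Lf (m s) (P s)) has_real_derivative (Lf (m t) dP + Lf m' (P t))) (at t)"
proof -
  have dp: "\<And>j. ((\<lambda>s. coeff (P s) j) has_real_derivative coeff dP j) (at t)"
    and dg: "\<And>s. degree (P s) \<le> N" "degree dP \<le> N"
    using assms unfolding pd_def by auto
  have "((\<lambda>s. \<Sum>j\<le>N. coeff (P s) j * m s j) has_real_derivative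
      (\<Sum>j\<le>N. coeff dP j * m t j + coeff (P t) j * m' j)) (at t)"
    by (intro DERIV_sum, rule DERIV_cong[OF DERIV_mult[OF dp assms(2)]]) (simp add: algebra_simps)
  moreover have "(\<Sum>j\<le>N. coeff dP j * m t j + coeff (P t) j * m' j) = Lf (m t) dP + Lf m' (P t)"
    using Lf_bound[OF dg(2), of "m t"] Lf_bound[OF dg(1)[of t], of m'] by (simp add: sum.distrib)
  moreover have "\<And>s. Lf (m s) (P s) = (\<Sum>j\<le>N. coeff (P s) j * m s j)"
    using Lf_bound[OF dg(1)] by blast
  ultimately show ?thesis by simp
qed

context jw begin

lemma pd_Ip:
  assumes "0 < t" "t < 1" "pd N P dP t"
  shows "((\<lambda>s. Ip s (P s)) has_real_derivative (Ip t dP - B * u t * poly (P t) t)) (at t)"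
proof -
  have "((\<lambda>s. Lf (mu s) (P s)) has_real_derivative (Lf (mu t) dP + Lf (\<lambda>j. (- B * u t) * t ^ j) (P t))) (at t)"
    by (rule pd_Lf[OF assms(3)]) (use mu_deriv[OF assms(1,2)] in \<open>simp add: algebra_simps\<close>)
  thus ?thesis using Lf_poly[of "- B * u t" t "P t"] by (simp add: Ip_def)
qed

lemma pd_Jp:
  assumes "0 < t" "t < 1" "pd N P dP t"
  shows "((\<lambda>s. Jp s (P s)) has_real_derivative (Jp t dP - B * v t * poly (P t) t)) (at t)"
proof -
  have "((\<lambda>s. Lf (nu s) (P s)) has_real_derivative (Lf (nu t) dP + Lf (\<lambda>j. (- B * v t) * t ^ j) (P t))) (at t)"
    by (rule pd_Lf[OF assms(3)]) (use nu_deriv[OF assms(1,2)] in \<open>simp add: algebra_simps\<close>)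
  thus ?thesis using Lf_poly[of "- B * v t" t "P t"] by (simp add: Jp_def)
qed

lemma ipf_Ip: "0 < s \<Longrightarrow> s < 1 \<Longrightarrow> ipf (Ip s)"
  unfolding ipf_def Ip_def using Ip_pos[of s] by (auto simp: Lf_add Lf_smult Ip_def)

lemma gs_pd: "0 < t \<Longrightarrow> t < 1 \<Longrightarrow> \<exists>dP. pd n (\<lambda>s. gs (Ip s) n) dP t"
proof (induction n rule: less_induct)
  case (less n)
  interpret ipf "Ip t" by (rule ipf_Ip) (use less.prems in auto)
  have "\<forall>k\<in>{..<n}. \<exists>d. pd k (\<lambda>s. gs (Ip s) k) d t" using less by auto
  then obtain dG where dG: "\<And>k. k < n \<Longrightarrow> pd k (\<lambda>s. gs (Ip s) k) (dG k) t"
    using bchoice[of "{..<n}"] by (metis lessThan_iff)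
  define c where "c k s = Ip s (monom 1 n * gs (Ip s) k) / Ip s (gs (Ip s) k * gs (Ip s) k)" for k s
  have dc: "\<exists>c'. ((\<lambda>s. c k s) has_real_derivative c') (at t)" if k: "k < n" for k
  proof -
    have p1: "pd (n + k) (\<lambda>s. monom 1 n * gs (Ip s) k) (0 * gs (Ip t) k + monom 1 n * dG k) t"
      by (rule pd_mult[OF pd_const dG[OF k]]) (simp add: degree_monom_le)
    have p2: "pd (k + k) (\<lambda>s. gs (Ip s) k * gs (Ip s) k) (dG k * gs (Ip t) k + gs (Ip t) k * dG k) t"
      by (rule pd_mult[OF dG[OF k] dG[OF k]])
    have "Ip t (gs (Ip t) k * gs (Ip t) k) \<noteq> 0" using hpos[of k] by simp
    thus ?thesis unfolding c_def
      using DERIV_divide[OF pd_Ip[OF less.prems p1] pd_Ip[OF less.prems p2]] by blast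
  qed
  then obtain c' where c': "\<And>k. k < n \<Longrightarrow> ((\<lambda>s. c k s) has_real_derivative c' k) (at t)"
    by metis
  have ps: "pd n (\<lambda>s. \<Sum>k<n. smult (c k s) (gs (Ip s) k))
     (\<Sum>k<n. smult (c' k) (gs (Ip t) k) + smult (c k t) (dG k)) t"
    by (rule pd_sum) (auto intro!: pd_mono[OF pd_smult[OF dG c']])
  have "pd n (\<lambda>s. monom 1 n - (\<Sum>k<n. smult (c k s) (gs (Ip s) k)))
     (0 - (\<Sum>k<n. smult (c' k) (gs (Ip t) k) + smult (c k t) (dG k))) t"
    by (rule pd_diff[OF pd_const ps]) (simp add: degree_monom_le)
  moreover have "(\<lambda>s. gs (Ip s) n) = (\<lambda>s. monom 1 n - (\<Sum>k<n. smult (c k s) (gs (Ip s) k)))"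
    by (rule ext, subst gs.simps) (simp add: c_def)
  ultimately show ?case by auto
qed

end

lemma final_alg:
  fixes be a b c d K h h1 D t S Fv :: real
  assumes t: "0 < t" "t < 1" and h: "h > 0" "h1 > 0" and be: "be > 0"
    and cK: "c * K > 0"
    and ibp: "be * (c * K) = S * h + D * t * a^2"
    and Fv: "Fv * (t - 1) = d * a - c * b"
  defines "X \<equiv> be / h * (c * K)"
  defines "Y \<equiv> be / h1 * (d * K)"
  defines "r \<equiv> D * a * b / h1"
  defines "X' \<equiv> - be * (- D * a^2) / h^2 * (c * K) + be / h * (2 * ((D * a * Fv / h1) * K) - D / (1 - t) * a^2)"
  shows "r = - 1 / 2 + (S + (1 - t) * X') / (2 * X)
      - (2 * Y + be - (1 - t) * X + t) * (S - X) / (2 * t * X)"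
proof -
  have cK0: "c \<noteq> 0" "K \<noteq> 0" using cK by auto
  have X: "X \<noteq> 0" using cK0 h be by (simp add: X_def)
  have t1: "t - 1 \<noteq> 0" "1 - t \<noteq> 0" "t \<noteq> 0" using t by auto
  define Z where "Z = D * a^2 / h"
  have SX: "S = X - t * Z" using ibp h unfolding X_def Z_def by (simp add: field_simps)
  have e1: "X' = Z*X + 2*be*D*a*K*Fv/(h*h1) - be*Z/(1-t)"
    unfolding X'_def Z_def X_def using h t1 by (simp add: field_simps power2_eq_square)
  have e2: "(t-1)*X' = (t-1)*Z*X + 2*be*D*a*K*(Fv*(t-1))/(h*h1) + be*Z"
    unfolding e1 using h t1 by (simp add: field_simps)
  have e3: "(1-t)*X' = - ((t-1)*Z*X + 2*(Z*Y - r*X) + be*Z)"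
  proof -
    have "(t-1)*X' = (t-1)*Z*X + 2*(Z*Y - r*X) + be*Z"
      unfolding e2 Fv unfolding Z_def X_def Y_def r_def using h by (simp add: field_simps power2_eq_square)
    thus ?thesis by (simp add: algebra_simps)
  qed
  show ?thesis unfolding SX e3 using X t1 by (simp add: field_simps)
qed

lemma deg_lt_or0: "degree (E::real poly) \<le> m \<Longrightarrow> coeff E m = 0 \<Longrightarrow> E = 0 \<or> degree E < m"
  by (metis le_neq_implies_less leading_coeff_0_iff)

lemma synth_const: "degree g = 0 \<Longrightarrow> synthetic_div g c = 0"
  by (metis degree_eq_zeroE synthetic_div_0 synthetic_div_pCons pCons_0_0 poly_0)

lemma lin_mult: "[:-1, 1:] * f = pCons 0 f - (f :: real poly)"
  by (simp add: mult_pCons_left)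

context jw begin

lemma int_eq: "0 \<le> s \<Longrightarrow> s \<le> 1 \<Longrightarrow> integral {0..1} (\<lambda>x. poly p x * wt al be A B s x) = Ip s p"
  using int_poly by (rule integral_unique)

lemma intJ_eq: "0 \<le> s \<Longrightarrow> s < 1 \<Longrightarrow> integral {0..1} (\<lambda>x. poly p x / (1 - x) * wt al be A B s x) = Jp s p"
  using int_polyJ by (rule integral_unique)

lemma OP_eq:
  assumes s: "0 < s" "s < 1"
  shows "OP al be A B k s = gs (Ip s) k"
proof -
  interpret ipf "Ip s" by (rule ipf_Ip) (use s in auto)
  have e: "(\<lambda>x. poly P x * poly Q x * wt al be A B s x) = (\<lambda>x. poly (P * Q) x * wt al be A B s x)" for P Q
    by simp
  have iff: "is_monic_OP al be A B s k P \<longleftrightarrow> degree P = k \<and> coeff P k = 1 \<and> (\<forall>Q. degree Q < k \<longrightarrow> Ip s (P * Q) = 0)" for P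
    unfolding is_monic_OP_def using int_eq[of s "P * Q" for Q] s by auto
  show ?thesis unfolding OP_def
  proof (rule the_equality)
    show "is_monic_OP al be A B s k (gs (Ip s) k)" unfolding iff using orth_all gs_lead by auto
  next
    fix P assume "is_monic_OP al be A B s k P"
    thus "P = gs (Ip s) k" unfolding iff using unique by blast
  qed
qed

lemma hint: "0 \<le> s \<Longrightarrow> s \<le> 1 \<Longrightarrow> integral {0..1} (\<lambda>x. (poly P x)\<^sup>2 * wt al be A B s x) = Ip s (P * P)"
  using int_eq[of s "P * P"] by (simp add: power2_eq_square)

lemma jint: "0 \<le> s \<Longrightarrow> s < 1 \<Longrightarrow> integral {0..1} (\<lambda>x. (poly P x)\<^sup>2 / (1 - x) * wt al be A B s x) = Jp s (P * P)"
  using intJ_eq[of s "P * P"] by (simp add: power2_eq_square)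

lemma jint2: "0 \<le> s \<Longrightarrow> s < 1 \<Longrightarrow> integral {0..1} (\<lambda>x. poly P x * poly Q x / (1 - x) * wt al be A B s x) = Jp s (P * Q)"
  using intJ_eq[of s "P * Q"] by simp

lemma hn_eq: "0 < s \<Longrightarrow> s < 1 \<Longrightarrow> hn al be A B k s = Ip s (gs (Ip s) k * gs (Ip s) k)"
  unfolding hn_def OP_eq by (rule hint) auto

lemma xn_eq: "0 < s \<Longrightarrow> s < 1 \<Longrightarrow>
   xn al be A B n s = be / Ip s (gs (Ip s) n * gs (Ip s) n) * Jp s (gs (Ip s) n * gs (Ip s) n)"
  unfolding xn_def hn_eq OP_eq by (subst jint) auto

lemma yn_eq: "0 < s \<Longrightarrow> s < 1 \<Longrightarrow>
   yn al be A B n s = be / Ip s (gs (Ip s) (n-1) * gs (Ip s) (n-1)) * Jp s (gs (Ip s) n * gs (Ip s) (n-1))"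
  unfolding yn_def hn_eq OP_eq by (subst jint2) auto

lemma rn_eq: "0 < s \<Longrightarrow> s < 1 \<Longrightarrow>
   rn al be A B n s = B * u s * poly (gs (Ip s) n) s * poly (gs (Ip s) (n-1)) s / Ip s (gs (Ip s) (n-1) * gs (Ip s) (n-1))"
  unfolding rn_def hn_eq OP_eq u_def by simp

end

context jw begin

lemma main:
  assumes t: "0 < t" "t < 1" and n: "n \<ge> 1"
  shows "(xn al be A B n has_real_derivative deriv (xn al be A B n) t) (at t) \<and>
    rn al be A B n t =
      - 1 / 2 + (2 * real n + 1 + al + be + (1 - t) * deriv (xn al be A B n) t) / (2 * xn al be A B n t)
      - (2 * yn al be A B n t + be - (1 - t) * xn al be A B n t + t)
        * (2 * real n + 1 + al + be - xn al be A B n t) / (2 * t * xn al be A B n t)"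
proof -
  interpret ipf "Ip t" by (rule ipf_Ip) (use t in auto)
  define G where "G s = gs (Ip s) n" for s
  define H where "H s = gs (Ip s) (n - 1)" for s
  define P where "P = G t"
  define Q where "Q = H t"
  have P_gs: "P = gs (Ip t) n" by (simp add: P_def G_def)
  have Q_gs: "Q = gs (Ip t) (n - 1)" by (simp add: Q_def H_def)
  obtain dP where pdG: "pd n G dP t" using gs_pd[OF t, of n] unfolding G_def[abs_def] by blast
  have degP: "degree P = n" and degQ: "degree Q = n - 1" by (simp_all add: P_gs Q_gs)
  have cP: "coeff P n = 1" and cQ: "coeff Q (n - 1) = 1" by (simp_all add: P_gs Q_gs gs_lead)
  have hP: "Ip t (P * P) > 0" and hQ: "Ip t (Q * Q) > 0" by (simp_all add: P_gs Q_gs hpos)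
  have orthP: "degree q < n \<Longrightarrow> Ip t (P * q) = 0" for q using orth_all by (simp add: P_gs)
  have orthQ: "degree q < n - 1 \<Longrightarrow> Ip t (Q * q) = 0" for q using orth_all by (simp add: Q_gs)
  have Jlin: "Jp t (p + q) = Jp t p + Jp t q" "Jp t (smult c p) = c * Jp t p" for p q c
    by (simp_all add: Jp_def Lf_add Lf_smult)
  have Ilin: "Ip t (p + q) = Ip t p + Ip t q" "Ip t (smult c p) = c * Ip t p" for p q c
    by (simp_all add: ip_add ip_smult)

  have cdP: "coeff dP j = 0" if j: "j \<ge> n" for j
  proof -
    have "(\<lambda>s. coeff (G s) j) = (\<lambda>s. if j = n then 1 else 0)"
      using j by (auto simp: G_def gs_lead intro!: coeff_eq_0)
    moreover have "((\<lambda>s. coeff (G s) j) has_real_derivative coeff dP j) (at t)" using pdG by (simp add: pd_def)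
    ultimately show ?thesis using DERIV_unique DERIV_const by metis
  qed
  have degdP: "degree dP < n"
  proof -
    have "degree dP \<le> n - 1" by (rule degree_le) (use cdP in auto)
    thus ?thesis using n by simp
  qed

  txt \<open>differentiated orthogonality\<close>
  have F1: "Ip t (dP * q) = B * u t * poly P t * poly q t" if q: "degree q < n" for q
  proof -
    have pq: "pd (n + degree q) (\<lambda>s. G s * q) (dP * q + G t * 0) t"
      by (rule pd_mult[OF pdG pd_const]) simp
    have d1: "((\<lambda>s. Ip s (G s * q)) has_real_derivative (Ip t (dP * q + G t * 0) - B * u t * poly (G t * q) t)) (at t)"
      by (rule pd_Ip[OF t pq])
    have d0: "((\<lambda>s. Ip s (G s * q)) has_real_derivative 0) (at t)"
    proof (rule has_field_derivative_transform_within_open[OF DERIV_const, where S="{0<..<1}"])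
      fix s :: real assume s: "s \<in> {0<..<1}"
      interpret s: ipf "Ip s" by (rule ipf_Ip) (use s in auto)
      show "0 = Ip s (G s * q)" unfolding G_def using s.orth_all[OF q] by simp
    qed (use t in auto)
    show ?thesis using DERIV_unique[OF d1 d0] by (simp add: P_def)
  qed

  have pGG: "pd (n + n) (\<lambda>s. G s * G s) (dP * P + P * dP) t"
    unfolding P_def by (rule pd_mult[OF pdG pdG])
  have dh: "((\<lambda>s. Ip s (G s * G s)) has_real_derivative (Ip t (dP * P + P * dP) - B * u t * poly (P * P) t)) (at t)"
    using pd_Ip[OF t pGG] by (simp add: P_def)
  have dJ: "((\<lambda>s. Jp s (G s * G s)) has_real_derivative (Jp t (dP * P + P * dP) - B * v t * poly (P * P) t)) (at t)"
    using pd_Jp[OF t pGG] by (simp add: P_def)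
  have IPdP: "Ip t (dP * P + P * dP) = 0"
    using orthP[OF degdP] by (subst Ilin(1)) (simp add: mult.commute)
  have JPdP: "Jp t (dP * P + P * dP) = 2 * Jp t (P * dP)"
    by (subst Jlin(1)) (simp add: mult.commute)

  define h where "h = Ip t (P * P)"
  define h1 where "h1 = Ip t (Q * Q)"
  define Jsq where "Jsq = Jp t (P * P)"
  define X' where "X' = (0 * h - be * (- (B * u t) * (poly P t)^2)) / h^2 * Jsq
      + be / h * (2 * Jp t (P * dP) - B * v t * (poly P t)^2)"
  have dX: "((\<lambda>s. be / Ip s (G s * G s) * Jp s (G s * G s)) has_real_derivative X') (at t)"
  proof -
    have "((\<lambda>s. be / Ip s (G s * G s)) has_real_derivative (0 * h - be * (- (B * u t) * (poly P t)^2)) / h^2) (at t)"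
      using DERIV_divide[OF DERIV_const dh] hP IPdP
      by (simp add: h_def P_def power2_eq_square)
    from DERIV_mult[OF this dJ[unfolded JPdP]] show ?thesis
      unfolding X'_def
      by (rule DERIV_cong) (simp add: h_def Jsq_def P_def power2_eq_square algebra_simps)
  qed
  have dxn: "(xn al be A B n has_real_derivative X') (at t)"
  proof (rule has_field_derivative_transform_within_open[OF dX, where S="{0<..<1}"])
    fix s :: real assume s: "s \<in> {0<..<1}"
    show "be / Ip s (G s * G s) * Jp s (G s * G s) = xn al be A B n s"
      using xn_eq[of s n] s by (simp add: G_def)
  qed (use t in auto)
  have derivX: "deriv (xn al be A B n) t = X'" by (rule DERIV_imp_deriv[OF dxn])
  define a where "a = poly P t"
  define b where "b = poly Q t"
  define c where "c = poly P 1"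
  define d where "d = poly Q 1"
  define K where "K = Jp t P"
  have Jlemma: "Jp t (P * g) = poly g 1 * K" if g: "degree g \<le> n" for g
  proof -
    define r where "r = synthetic_div g 1"
    have ge: "g = [:-1, 1:] * r + [:poly g 1:]" using synthetic_div_correct'[of 1 g] by (simp add: r_def)
    have "degree r < n" using g n by (simp add: r_def degree_synthetic_div)
    hence "Ip t (P * r) = 0" by (rule orthP)
    moreover have "P * g = [:-1, 1:] * (P * r) + smult (poly g 1) P"
      by (subst ge) (simp add: algebra_simps)
    ultimately show ?thesis using Jp_lin1[of t "P * r"] t by (simp add: Jlin K_def)
  qed
  have d0: "d \<noteq> 0"
  proof
    assume dz: "d = 0"
    define r where "r = synthetic_div Q 1"
    have Qr: "Q = [:-1, 1:] * r" using synthetic_div_correct'[of 1 Q] dz by (simp add: r_def d_def)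
    have r0: "r \<noteq> 0" using Qr gs_nz[of "Ip t" "n - 1"] Q_gs by auto
    have "degree Q = 1 + degree r" unfolding Qr using r0 by (subst degree_mult_eq) auto
    hence "degree r < n - 1" using degQ by simp
    hence z: "Ip t (Q * r) = 0" by (rule orthQ)
    have "Ip t (smult (-1) ([:-1, 1:] * (r * r))) > 0"
    proof (rule ip_pos)
      have nz1: "[:-1, 1::real:] \<noteq> 0" by simp
      show "smult (-1) ([:-1, 1:] * (r * r)) \<noteq> 0" using r0 nz1
        by (metis mult_eq_0_iff smult_eq_0_iff neg_equal_0_iff_equal one_neq_zero)
    next
      fix x :: real assume "0 \<le> x" "x \<le> 1"
      thus "poly (smult (-1) ([:-1, 1:] * (r * r))) x \<ge> 0"
      proof -
        have "x * (poly r x * poly r x) \<le> 1 * (poly r x * poly r x)"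
          using \<open>x \<le> 1\<close> by (intro mult_right_mono) auto
        thus ?thesis by simp
      qed
    qed
    moreover have "Q * r = [:-1, 1:] * (r * r)" unfolding Qr by (simp only: mult.assoc)
    ultimately show False using z by (simp add: ip_smult ip_diff)
  qed
  define W where "W = smult d P - smult c Q"
  define Fv where "Fv = synthetic_div W 1"
  have WF: "W = [:-1, 1:] * Fv"
    using synthetic_div_correct'[of 1 W] by (simp add: Fv_def W_def c_def d_def)
  have degW: "degree W \<le> n" unfolding W_def using degP degQ
    by (intro degree_diff_le order.trans[OF degree_smult_le]) auto
  have degF: "degree Fv \<le> n - 1" using degW by (simp add: Fv_def degree_synthetic_div)
  have cF: "coeff Fv (n - 1) = d"
  proof -
    have "coeff W n = d" using cP degQ n by (simp add: W_def coeff_eq_0)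
    moreover have "coeff W n = coeff Fv (n - 1) - coeff Fv n"
      unfolding WF lin_mult using n by (cases n) auto
    moreover have "coeff Fv n = 0" using degF n by (intro coeff_eq_0) auto
    ultimately show ?thesis by simp
  qed
  have R0: "Ip t (Fv * g) = poly g 1 * Ip t Fv" if g: "degree g < n" for g
  proof -
    define r where "r = synthetic_div g 1"
    have ge: "g = [:-1, 1:] * r + [:poly g 1:]" using synthetic_div_correct'[of 1 g] by (simp add: r_def)
    have "Fv * g = W * r + smult (poly g 1) Fv" unfolding WF by (subst ge) (simp add: algebra_simps)
    moreover have "Ip t (P * r) = 0" using g by (intro orthP) (simp add: r_def degree_synthetic_div)
    moreover have "Ip t (Q * r) = 0"
    proof (cases "r = 0")
      case False
      hence "degree g \<noteq> 0" using synth_const r_def by auto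
      hence "degree r < n - 1" using g by (simp add: r_def degree_synthetic_div)
      thus ?thesis by (rule orthQ)
    qed simp
    moreover have "W * r = smult d (P * r) - smult c (Q * r)" by (simp add: W_def left_diff_distrib mult_smult_left)
    ultimately show ?thesis by (simp only: ip_add ip_diff ip_smult)
  qed
  have IF: "Ip t Fv = Ip t (Q * Q)"
  proof -
    define E where "E = Fv - smult d Q"
    have "degree E \<le> n - 1" unfolding E_def using degF degQ
      by (intro degree_diff_le order.trans[OF degree_smult_le]) auto
    moreover have "coeff E (n - 1) = 0" using cF cQ by (simp add: E_def)
    ultimately have "E = 0 \<or> degree E < n - 1" by (rule deg_lt_or0)
    hence "Ip t (Q * E) = 0" using orthQ by auto
    moreover have "Fv * Q = Q * E + smult d (Q * Q)" by (simp add: E_def algebra_simps)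
    moreover have "Ip t (Fv * Q) = d * Ip t Fv" using R0[of Q] degQ n by (simp add: d_def)
    ultimately have "d * Ip t Fv = d * Ip t (Q * Q)" by (simp add: Ilin) (metis)
    thus ?thesis using d0 by simp
  qed
  have dP1: "Ip t (Q * Q) * poly dP 1 = B * u t * a * poly Fv t"
  proof -
    have "Ip t (Fv * dP) = poly dP 1 * Ip t (Q * Q)" using R0[OF degdP] IF by simp
    moreover have "Ip t (dP * Fv) = B * u t * a * poly Fv t" using F1[of Fv] degF n by (simp add: a_def)
    ultimately show ?thesis by (simp add: mult.commute)
  qed
  have FvT: "poly Fv t * (t - 1) = d * a - c * b"
  proof -
    have "poly W t = d * a - c * b" by (simp add: W_def a_def b_def)
    moreover have "poly W t = (t - 1) * poly Fv t" unfolding WF by (simp add: algebra_simps)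
    ultimately show ?thesis by (simp add: mult.commute)
  qed
  have xPP: "Ip t (pCons 0 (pderiv (P * P))) = 2 * real n * h"
  proof -
    define xP where "xP = pCons 0 (pderiv P)"
    have e: "pCons 0 (pderiv (P * P)) = smult 2 (P * xP)"
      by (subst poly_eq_poly_eq_iff[symmetric]) (auto simp: xP_def pderiv_mult fun_eq_iff algebra_simps)
    define E2 where "E2 = xP - smult (real n) P"
    have "degree xP \<le> n" unfolding xP_def using degP n
      by (metis Suc_diff_1 degree_pCons_le degree_pderiv less_le_trans order.refl le_SucE le_less_Suc_eq not_le zero_less_one)
    hence "degree E2 \<le> n" unfolding E2_def using degP
      by (intro degree_diff_le order.trans[OF degree_smult_le]) auto
    moreover have "coeff xP n = real n" using n cP
      by (cases n) (auto simp: xP_def coeff_pderiv)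
    hence "coeff E2 n = 0" using cP by (simp add: E2_def)
    ultimately have "E2 = 0 \<or> degree E2 < n" by (rule deg_lt_or0)
    hence "Ip t (P * E2) = 0" using orthP by auto
    moreover have "P * xP = P * E2 + smult (real n) (P * P)" by (simp add: E2_def algebra_simps)
    ultimately have "Ip t (P * xP) = real n * h" by (simp add: Ilin h_def)
    thus ?thesis unfolding e by (simp add: Ilin)
  qed
  have ibp: "be * Jsq = (2 * real n + 1 + al + be) * h + (B * u t) * t * a^2"
    using Jp_ibp[OF t, of "P * P"] xPP by (simp add: Jsq_def h_def a_def power2_eq_square algebra_simps)
  have JsqK: "Jsq = c * K" using Jlemma[of P] degP by (simp add: Jsq_def c_def)
  have JPQ: "Jp t (P * Q) = d * K" using Jlemma[of Q] degQ by (simp add: d_def)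
  have JPdP': "Jp t (P * dP) = poly dP 1 * K" using Jlemma[of dP] degdP by simp
  have Jpos: "Jsq > 0"
  proof -
    have "Jsq - Jp t (pCons 0 (P * P)) = h" using Jp_Ip[of t "P * P"] t by (simp add: Jsq_def h_def)
    moreover have "Jp t (pCons 0 (P * P)) \<ge> 0" by (rule Jp_nonneg) (use t in auto)
    ultimately show ?thesis using hP h_def by linarith
  qed
  have vt: "B * v t = B * u t / (1 - t)" by (simp add: v_def)
  have dP1': "poly dP 1 = B * u t * a * poly Fv t / h1" using dP1 hQ by (simp add: h1_def field_simps)
  have Xe: "X' = - be * (- (B * u t) * a^2) / h^2 * (c * K) + be / h * (2 * (((B * u t) * a * poly Fv t / h1) * K) - (B * u t) / (1 - t) * a^2)"
    unfolding X'_def JPdP' dP1' JsqK vt by (simp add: a_def)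
  have xt: "xn al be A B n t = be / h * (c * K)" using xn_eq[OF t, of n] JsqK unfolding Jsq_def h_def P_gs by simp
  have yt: "yn al be A B n t = be / h1 * (d * K)" using yn_eq[OF t, of n] JPQ by (simp add: h1_def P_gs Q_gs)
  have rt: "rn al be A B n t = (B * u t) * a * b / h1" using rn_eq[OF t, of n] by (simp add: h1_def a_def b_def P_gs Q_gs)
  have fin: "(B * u t) * a * b / h1 = - 1 / 2 + (2 * real n + 1 + al + be + (1 - t) * X') / (2 * (be / h * (c * K)))
      - (2 * (be / h1 * (d * K)) + be - (1 - t) * (be / h * (c * K)) + t) * (2 * real n + 1 + al + be - be / h * (c * K)) / (2 * t * (be / h * (c * K)))"
    unfolding Xe
    by (rule final_alg[OF t _ _ be]) (use hP hQ Jpos JsqK ibp FvT in \<open>auto simp: h_def h1_def\<close>)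
  show ?thesis using dxn derivX xt yt rt fin by simp
qed

end

theorem lemma4p2:
  fixes \<alpha> \<beta> A B t :: real and n :: nat
  assumes "\<alpha> > 0" "\<beta> > 0" "A \<ge> 0" "A + B \<ge> 0" "\<not> (A = 0 \<and> B = 0)"
    and "0 < t" "t < 1" and "n \<ge> 1"
  shows "(xn \<alpha> \<beta> A B n has_real_derivative deriv (xn \<alpha> \<beta> A B n) t) (at t) \<and>
    rn \<alpha> \<beta> A B n t =
      - 1 / 2 + (2 * real n + 1 + \<alpha> + \<beta> + (1 - t) * deriv (xn \<alpha> \<beta> A B n) t) / (2 * xn \<alpha> \<beta> A B n t)
      - (2 * yn \<alpha> \<beta> A B n t + \<beta> - (1 - t) * xn \<alpha> \<beta> A B n t + t)
        * (2 * real n + 1 + \<alpha> + \<beta> - xn \<alpha> \<beta> A B n t) / (2 * t * xn \<alpha> \<beta> A B n t)"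
proof -
  interpret jw \<alpha> \<beta> A B by unfold_locales (use assms in auto)
  show ?thesis by (rule main) (use assms in auto)
qed

end
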